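(* For any integers $k,l\geq 1$, the equation $$[[x_1,\dots,x_k],[x_{k+1},\dots,x_{k+l}]]=\beta_{k+l}({\sf Sum}(C_{k,l}))$$ holds in $\mathbb Z\langle x_1,\dots,x_{k+l}\rangle$.
   Context: $\mathbb Z\langle x_1,\dots,x_m\rangle$ is the free associative ring on $x_1,\dots,x_m$, with bracket $[u,v]=uv-vu$ and left-normed brackets $[u_1,\dots,u_r]=[[u_1,\dots,u_{r-1}],u_r]$. $S_m$ is the symmetric group on $\{1,\dots,m\}$, with product $(\sigma\tau)(i)=\sigma(\tau(i))$. $\gamma_m$ is the additive subgroup spanned by the monomials $x_{\sigma(1)}\cdots x_{\sigma(m)}$, $\sigma\in S_m$; $\beta_m:\gamma_m\to\gamma_m$ is the homomorphism with $\beta_m(x_{\sigma(1)}\cdots x_{\sigma(m)})=[x_{\sigma(1)},\dots,x_{\sigma(m)}]$; for $T\subseteq S_m$, ${\sf Sum}(T)=\sum_{\sigma\in T}x_{\sigma(1)}\cdots x_{\sigma(m)}$. An $(s,t)$-shuffle is a pair $(\alpha,\beta)$ of strictly increasing maps $\alpha:\{1,\dots,s\}\to\{1,\dots,s+t\}$, $\beta:\{1,\dots,t\}\to\{1,\dots,s+t\}$ with disjoint images; ${\sf Sh}^1(s,t)$ is the set of those with $\alpha(1)=1$. For $k,l\geq1$, $0\leq i\leq l-1$ and $(\alpha,\beta)\in{\sf Sh}^1(l-i,i)$, let $\tilde\sigma_{\alpha,\beta,k,l}\in S_{k+l}$ be given by $\tilde\sigma(j)=j$ for $1\leq j\leq k$,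 $\tilde\sigma(k+j)=k+\beta(i+1-j)$ for $1\leq j\leq i$, and $\tilde\sigma(k+i+j)=k+\alpha(j)$ for $1\leq j\leq l-i$; let $\sigma_{\alpha,\beta,k,l}=\tilde\sigma_{\alpha,\beta,k,l}\circ(1,2)^i$, where $(1,2)$ is the transposition. Set $C_{k,l}=\{\sigma_{\alpha,\beta,k,l}\mid 0\leq i\leq l-1,\ (\alpha,\beta)\in{\sf Sh}^1(l-i,i)\}\subseteq S_{k+l}$. *)

theory Defs
  imports "HOL-Combinatorics.Permutations" "HOL-Combinatorics.Transposition"
begin

text \<open>Elements of Z<x_1,x_2,...> are modelled by their coefficient functions on words
(lists of variable indices).  Every such function is an element of the ring of
noncommutative formal power series over Z, which contains the free associative ring
as a subring; all elements occurring below are finite combinations of monomials.\<close>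

type_synonym ncpoly = "nat list \<Rightarrow> int"

definition padd :: "ncpoly \<Rightarrow> ncpoly \<Rightarrow> ncpoly" where
  "padd p q = (\<lambda>w. p w + q w)"

definition psub :: "ncpoly \<Rightarrow> ncpoly \<Rightarrow> ncpoly" where
  "psub p q = (\<lambda>w. p w - q w)"

definition pmul :: "ncpoly \<Rightarrow> ncpoly \<Rightarrow> ncpoly" where
  "pmul p q = (\<lambda>w. \<Sum>i\<le>length w. p (take i w) * q (drop i w))"

definition mono :: "nat list \<Rightarrow> ncpoly" where
  "mono u = (\<lambda>w. if w = u then 1 else 0)"

definition X :: "nat \<Rightarrow> ncpoly" where
  "X i = mono [i]"

definition br :: "ncpoly \<Rightarrow> ncpoly \<Rightarrow> ncpoly" where
  "br u v = psub (pmul u v) (pmul v u)"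

definition lbr :: "nat list \<Rightarrow> ncpoly" where
  "lbr xs = foldl (\<lambda>u a. br u (X a)) (X (hd xs)) (tl xs)"

definition pword :: "nat \<Rightarrow> (nat \<Rightarrow> nat) \<Rightarrow> nat list" where
  "pword m \<sigma> = map \<sigma> [1..<m+1]"

definition psum :: "'a set \<Rightarrow> ('a \<Rightarrow> ncpoly) \<Rightarrow> ncpoly" where
  "psum T f = (\<lambda>w. \<Sum>a\<in>T. f a w)"

definition SumP :: "nat \<Rightarrow> (nat \<Rightarrow> nat) set \<Rightarrow> ncpoly" where
  "SumP m T = psum T (\<lambda>\<sigma>. mono (pword m \<sigma>))"

text \<open>beta_m: the additive map on gamma_m sending x_{\<sigma>(1)}...x_{\<sigma>(m)} to
[x_{\<sigma>(1)},...,x_{\<sigma>(m)}]; written as the linear extension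
p \<mapsto> \<Sum>_\<sigma> (coefficient of the \<sigma>-monomial in p) * bracket.\<close>
definition beta :: "nat \<Rightarrow> ncpoly \<Rightarrow> ncpoly" where
  "beta m p = psum {\<sigma>. \<sigma> permutes {1..m}}
      (\<lambda>\<sigma> w. p (pword m \<sigma>) * lbr (pword m \<sigma>) w)"

definition shuffle :: "nat \<Rightarrow> nat \<Rightarrow> (nat \<Rightarrow> nat) \<Rightarrow> (nat \<Rightarrow> nat) \<Rightarrow> bool" where
  "shuffle s t \<alpha> \<beta> \<longleftrightarrow>
     strict_mono_on {1..s} \<alpha> \<and> strict_mono_on {1..t} \<beta> \<and>
     \<alpha> ` {1..s} \<subseteq> {1..s+t} \<and> \<beta> ` {1..t} \<subseteq> {1..s+t} \<and>
     \<alpha> ` {1..s} \<inter> \<beta> ` {1..t} = {}"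

definition Sh1 :: "nat \<Rightarrow> nat \<Rightarrow> (nat \<Rightarrow> nat) \<Rightarrow> (nat \<Rightarrow> nat) \<Rightarrow> bool" where
  "Sh1 s t \<alpha> \<beta> \<longleftrightarrow> shuffle s t \<alpha> \<beta> \<and> \<alpha> 1 = 1"

definition sigma_tilde :: "(nat \<Rightarrow> nat) \<Rightarrow> (nat \<Rightarrow> nat) \<Rightarrow> nat \<Rightarrow> nat \<Rightarrow> nat \<Rightarrow> nat \<Rightarrow> nat" where
  "sigma_tilde \<alpha> \<beta> k l i j =
     (if 1 \<le> j \<and> j \<le> k then j
      else if k + 1 \<le> j \<and> j \<le> k + i then k + \<beta> (i + 1 - (j - k))
      else if k + i + 1 \<le> j \<and> j \<le> k + l then k + \<alpha> (j - k - i)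
      else j)"

definition sigma_abkl :: "(nat \<Rightarrow> nat) \<Rightarrow> (nat \<Rightarrow> nat) \<Rightarrow> nat \<Rightarrow> nat \<Rightarrow> nat \<Rightarrow> nat \<Rightarrow> nat" where
  "sigma_abkl \<alpha> \<beta> k l i = sigma_tilde \<alpha> \<beta> k l i \<circ> ((transpose (1::nat) 2) ^^ i)"

definition Ckl :: "nat \<Rightarrow> nat \<Rightarrow> (nat \<Rightarrow> nat) set" where
  "Ckl k l = {sigma_abkl \<alpha> \<beta> k l i | i \<alpha> \<beta>. i \<le> l - 1 \<and> Sh1 (l - i) i \<alpha> \<beta>}"

end

theory Submission
  imports Defs
begin


lemma tri_swap: "(\<Sum>i\<le>(n::nat). \<Sum>j\<le>i. g i j) = (\<Sum>j\<le>n. \<Sum>i\<in>{j..n}. (g i j :: int))"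
proof (induction n)
  case 0 then show ?case by simp
next
  case (Suc n)
  have "(\<Sum>j\<le>Suc n. \<Sum>i\<in>{j..Suc n}. g i j) = (\<Sum>j\<le>n. \<Sum>i\<in>{j..Suc n}. g i j) + g (Suc n) (Suc n)"
    by simp
  also have "(\<Sum>j\<le>n. \<Sum>i\<in>{j..Suc n}. g i j) = (\<Sum>j\<le>n. (\<Sum>i\<in>{j..n}. g i j) + g (Suc n) j)"
    by (intro sum.cong) (auto simp: sum.cl_ivl_Suc)
  finally show ?case using Suc by (simp add: sum.distrib)
qed

lemma pmul_assoc: "pmul (pmul p q) r = pmul p (pmul q r)"
proof
  fix w :: "nat list"
  define n where "n = length w"
  have "pmul (pmul p q) r w = (\<Sum>i\<le>n. \<Sum>j\<le>i. p (take j w) * q (take (i-j) (drop j w)) * r (drop i w))"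
    unfolding pmul_def n_def
    by (intro sum.cong refl) (auto simp: sum_distrib_right min_def take_drop)
  also have "\<dots> = (\<Sum>j\<le>n. \<Sum>i\<in>{j..n}. p (take j w) * q (take (i-j) (drop j w)) * r (drop i w))"
    by (rule tri_swap)
  also have "\<dots> = pmul p (pmul q r) w"
    unfolding pmul_def n_def
  proof (intro sum.cong refl)
    fix j assume j: "j \<in> {..length w}"
    have "(\<Sum>i\<in>{j..length w}. p (take j w) * q (take (i-j) (drop j w)) * r (drop i w))
       = (\<Sum>m\<in>{0..length w - j}. p (take j w) * q (take m (drop j w)) * r (drop (m+j) w))"
      using j sum.shift_bounds_cl_nat_ivl[of "\<lambda>i. p (take j w) * q (take (i-j) (drop j w)) * r (drop i w)" 0 j "length w - j"]
      by simp
    then show "(\<Sum>i\<in>{j..length w}. p (take j w) * q (take (i-j) (drop j w)) * r (drop i w)) =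
         p (take j w) * (\<Sum>i\<le>length (drop j w). q (take i (drop j w)) * r (drop i (drop j w)))"
      by (simp add: sum_distrib_left atLeast0AtMost mult.assoc add.commute)
  qed
  finally show "pmul (pmul p q) r w = pmul p (pmul q r) w" .
qed


lemma pmul_psub_left: "pmul (psub p q) r = psub (pmul p r) (pmul q r)"
  unfolding pmul_def psub_def by (auto simp: algebra_simps sum_subtractf)
lemma pmul_psub_right: "pmul r (psub p q) = psub (pmul r p) (pmul r q)"
  unfolding pmul_def psub_def by (auto simp: algebra_simps sum_subtractf)

lemma jacobi: "br u (br L Y) = psub (br (br u L) Y) (br (br u Y) L)"
  unfolding br_def pmul_psub_left pmul_psub_right pmul_assoc
  unfolding psub_def by auto

definition neg :: "ncpoly \<Rightarrow> ncpoly" where "neg p = (\<lambda>w. - p w)"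
definition sgnp :: "nat \<Rightarrow> ncpoly \<Rightarrow> ncpoly" where "sgnp n p = (if even n then p else neg p)"
definition step :: "ncpoly \<Rightarrow> nat \<Rightarrow> ncpoly" where "step u a = br u (X a)"
definition F :: "ncpoly \<Rightarrow> nat list \<Rightarrow> ncpoly" where "F u ws = foldl step u ws"

lemma pmul_neg_left: "pmul (neg p) q = neg (pmul p q)"
  unfolding pmul_def neg_def by (auto simp: sum_negf)
lemma pmul_neg_right: "pmul q (neg p) = neg (pmul q p)"
  unfolding pmul_def neg_def by (auto simp: sum_negf)
lemma br_neg_left: "br (neg p) v = neg (br p v)"
  unfolding br_def pmul_neg_left pmul_neg_right by (auto simp: psub_def neg_def)
lemma pmul_psum_left: "pmul (psum T f) q = psum T (\<lambda>t. pmul (f t) q)"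
  unfolding pmul_def psum_def by (auto simp: sum_distrib_right intro!: ext) (rule sum.swap)
lemma pmul_psum_right: "pmul q (psum T f) = psum T (\<lambda>t. pmul q (f t))"
  unfolding pmul_def psum_def by (auto simp: sum_distrib_left intro!: ext) (rule sum.swap)
lemma br_psum_left: "br (psum T f) v = psum T (\<lambda>t. br (f t) v)"
  unfolding br_def pmul_psum_left pmul_psum_right by (auto simp: psub_def psum_def sum_subtractf)
lemma step_neg: "step (neg p) a = neg (step p a)" by (simp add: step_def br_neg_left)
lemma step_sgnp: "step (sgnp n p) a = sgnp n (step p a)" by (simp add: sgnp_def step_neg)
lemma step_psum: "step (psum T f) a = psum T (\<lambda>t. step (f t) a)" by (simp add: step_def br_psum_left)
lemma F_psum: "F (psum T f) ws = psum T (\<lambda>t. F (f t) ws)"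
  unfolding F_def by (induction ws arbitrary: f) (auto simp: step_psum)
lemma F_neg: "F (neg p) ws = neg (F p ws)"
  unfolding F_def by (induction ws arbitrary: p) (auto simp: step_neg)
lemma F_sgnp: "F (sgnp n p) ws = sgnp n (F p ws)"
  by (simp add: sgnp_def F_neg)
lemma F_snoc: "F u (ws @ [a]) = step (F u ws) a" by (simp add: F_def)
lemma F_Cons: "F u (a # ws) = F (step u a) ws" by (simp add: F_def)

lemma lbr_append: "xs \<noteq> [] \<Longrightarrow> lbr (xs @ ys) = F (lbr xs) ys"
  by (cases xs) (auto simp: lbr_def F_def step_def[abs_def])

lemma sls_eq: "finite A \<Longrightarrow> sorted_wrt (<) l \<Longrightarrow> set l = A \<Longrightarrow> sorted_list_of_set A = (l::nat list)"
  using sorted_list_of_set_unique[of A l] strict_sorted_iff distinct_card by metis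

lemma sorted_insert_max:
  assumes "finite A" "\<forall>a\<in>A. a < (x::nat)"
  shows "sorted_list_of_set (insert x A) = sorted_list_of_set A @ [x]"
  using assms by (intro sls_eq) (auto simp: sorted_wrt_append)
  
definition wordB :: "nat \<Rightarrow> nat set \<Rightarrow> nat list" where
  "wordB n B = rev (sorted_list_of_set B) @ sorted_list_of_set ({1..n} - B)"

lemma lemA:
  assumes "n \<ge> 1"
  shows "br u (lbr (map (\<lambda>j. k + j) [1..<n+1])) =
     psum (Pow {2..n}) (\<lambda>B. sgnp (card B) (F u (map (\<lambda>j. k + j) (wordB n B))))"
  using assms
proof (induction n arbitrary: u rule: dec_induct)
  case base
  show ?case by (auto simp: lbr_def psum_def wordB_def F_def step_def sgnp_def)
next
  case (step n)
  define P where "P = Pow {2..n}"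
  define c where "c = k + Suc n"
  define f where "f = (\<lambda>u B. sgnp (card B) (F u (map (\<lambda>j. k + j) (wordB n B))))"
  have IH: "\<And>u. br u (lbr (map (\<lambda>j. k + j) [1..<n+1])) = psum P (f u)"
    using step.IH unfolding P_def f_def by blast
  have fin: "finite P" by (simp add: P_def)
  have M: "map (\<lambda>j. k + j) [1..<Suc n + 1] = map (\<lambda>j. k + j) [1..<n+1] @ [c]" by (simp add: c_def)
  have ne: "map (\<lambda>j. k + j) [1..<n+1] \<noteq> []" using step.hyps by simp
  have L: "lbr (map (\<lambda>j. k + j) [1..<Suc n + 1]) = step (lbr (map (\<lambda>j. k + j) [1..<n+1])) c"
    unfolding M lbr_append[OF ne] by (simp add: F_def)
  have "br u (lbr (map (\<lambda>j. k + j) [1..<Suc n + 1])) =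
     psub (step (psum P (f u)) c) (psum P (f (step u c)))"
    unfolding L step_def jacobi[of u] by (simp only: IH[of u] IH[of "br u (X c)"])
  also have "\<dots> = psub (psum P (\<lambda>B. step (f u B) c)) (psum P (f (step u c)))"
    by (simp add: step_psum)
  finally have E1: "br u (lbr (map (\<lambda>j. k + j) [1..<Suc n + 1])) =
     psub (psum P (\<lambda>B. step (f u B) c)) (psum P (f (step u c)))" .
  define g where "g = (\<lambda>B. sgnp (card B) (F u (map (\<lambda>j. k + j) (wordB (Suc n) B))))"
  have Pow_eq: "Pow {2..Suc n} = P \<union> insert (Suc n) ` P"
    using step.hyps by (simp add: P_def atLeastAtMostSuc_conv Pow_insert)
  have disj: "P \<inter> insert (Suc n) ` P = {}" by (auto simp: P_def)
  have inj: "inj_on (insert (Suc n)) P"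
  proof (rule inj_onI)
    fix X Y assume XY: "X \<in> P" "Y \<in> P" "insert (Suc n) X = insert (Suc n) Y"
    moreover have "Suc n \<notin> X" "Suc n \<notin> Y" using XY by (auto simp: P_def)
    ultimately show "X = Y" by (metis Diff_insert_absorb)
  qed
  have g1: "g B = step (f u B) c" if "B \<in> P" for B
  proof -
    have fB: "finite B" "Suc n \<notin> B" using that by (auto simp: P_def finite_subset)
    have "{1..Suc n} - B = insert (Suc n) ({1..n} - B)" using fB by auto
    moreover have "sorted_list_of_set (insert (Suc n) ({1..n} - B)) = sorted_list_of_set ({1..n} - B) @ [Suc n]"
      by (rule sorted_insert_max) auto
    ultimately have "sorted_list_of_set ({1..Suc n} - B) = sorted_list_of_set ({1..n} - B) @ [Suc n]"
      by simp
    then have "wordB (Suc n) B = wordB n B @ [Suc n]" by (simp add: wordB_def)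
    then show ?thesis by (simp add: g_def f_def c_def F_snoc step_sgnp)
  qed
  have g2: "g (insert (Suc n) B) = neg (f (step u c) B)" if "B \<in> P" for B
  proof -
    have fB: "finite B" "Suc n \<notin> B" "\<forall>a\<in>B. a < Suc n" using that by (auto simp: P_def finite_subset)
    have "sorted_list_of_set (insert (Suc n) B) = sorted_list_of_set B @ [Suc n]"
      using fB by (intro sorted_insert_max) auto
    moreover have "{1..Suc n} - insert (Suc n) B = {1..n} - B" by auto
    ultimately have "wordB (Suc n) (insert (Suc n) B) = Suc n # wordB n B" by (simp add: wordB_def)
    then show ?thesis using fB by (simp add: g_def f_def c_def F_Cons sgnp_def F_neg neg_def)
  qed
  have "psum (Pow {2..Suc n}) g = (\<lambda>w. psum P g w + psum (insert (Suc n) ` P) g w)"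
    unfolding Pow_eq psum_def using fin disj by (intro ext sum.union_disjoint) auto
  also have "\<dots> = (\<lambda>w. psum P (\<lambda>B. step (f u B) c) w + psum P (\<lambda>B. neg (f (step u c) B)) w)"
    unfolding psum_def by (subst sum.reindex[OF inj]) (auto intro!: ext arg_cong2[where f="(+)"] sum.cong simp: g1 g2)
  also have "\<dots> = psub (psum P (\<lambda>B. step (f u B) c)) (psum P (f (step u c)))"
    by (auto simp: psub_def psum_def neg_def sum_negf)
  finally show ?case using E1 by (simp add: g_def)
qed



lemma sorted_insert_min:
  assumes "finite A" "\<forall>a\<in>A. (x::nat) < a"
  shows "sorted_list_of_set (insert x A) = x # sorted_list_of_set A"
  using assms by (intro sls_eq) auto

lemma map_tilde_1: "map (sigma_tilde \<alpha> \<beta> k l i) [1..<k+1] = [1..<k+1]"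
  by (rule map_idI) (auto simp: sigma_tilde_def)

lemma map_tilde_2:
  "map (sigma_tilde \<alpha> \<beta> k l i) [k+1..<k+i+1] = map (\<lambda>j. k + j) (rev (map \<beta> [1..<i+1]))"
  by (rule nth_equalityI) (auto simp del: upt_Suc simp: sigma_tilde_def rev_nth Suc_diff_Suc)

lemma map_tilde_3:
  assumes "i \<le> l"
  shows "map (sigma_tilde \<alpha> \<beta> k l i) [k+i+1..<k+l+1] = map (\<lambda>j. k + j) (map \<alpha> [1..<l-i+1])"
  using assms by (intro nth_equalityI) (auto simp del: upt_Suc simp: sigma_tilde_def)

lemma upt_split: "a \<le> b \<Longrightarrow> b \<le> c \<Longrightarrow> [a..<c] = [a..<b] @ [b..<c]"
  using upt_add_eq_append[of a b "c - b"] by simp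

lemma pword_tilde:
  assumes "i \<le> l"
  shows "pword (k+l) (sigma_tilde \<alpha> \<beta> k l i) =
     [1..<k+1] @ map (\<lambda>j. k + j) (rev (map \<beta> [1..<i+1]) @ map \<alpha> [1..<l-i+1])"
proof -
  have "[1..<k+l+1] = [1..<k+1] @ [k+1..<k+i+1] @ [k+i+1..<k+l+1]"
    using assms upt_split[of 1 "k+1" "k+l+1"] upt_split[of "k+1" "k+i+1" "k+l+1"] by simp
  then show ?thesis using assms unfolding pword_def
    by (simp only: map_append map_tilde_1 map_tilde_2 map_tilde_3)
qed

lemma strict_map_sorted:
  assumes "strict_mono_on {1..n} f"
  shows "sorted_wrt (<) (map f [1..<n+1])"
  using assms unfolding sorted_wrt_iff_nth_less by (auto simp del: upt_Suc simp: strict_mono_on_def)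

lemma smo_card:
  assumes "strict_mono_on {1..n} (f::nat\<Rightarrow>nat)"
  shows "card (f ` {1..n}) = n"
  using strict_mono_on_imp_inj_on[OF assms] by (simp add: card_image)

lemma map_upt_image: "set (map f [1..<n+1]) = f ` {1..n}"
  by auto

lemma lemK:
  assumes sh: "Sh1 (l - i) i \<alpha> \<beta>" and il: "i \<le> l - 1" and l: "l \<ge> 1"
  shows "\<beta> ` {1..i} \<subseteq> {2..l}" "card (\<beta> ` {1..i}) = i"
    "pword (k+l) (sigma_tilde \<alpha> \<beta> k l i) = [1..<k+1] @ map (\<lambda>j. k + j) (wordB l (\<beta> ` {1..i}))"
proof -
  define A where "A = \<alpha> ` {1..l-i}"
  define B where "B = \<beta> ` {1..i}"
  have sa: "strict_mono_on {1..l-i} \<alpha>" and sb: "strict_mono_on {1..i} \<beta>"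
    and Asub: "A \<subseteq> {1..l}" and Bsub: "B \<subseteq> {1..l}" and disj: "A \<inter> B = {}" and a1: "\<alpha> 1 = 1"
    using sh il l unfolding Sh1_def shuffle_def A_def B_def by auto
  have cA: "card A = l - i" and cB: "card B = i" using smo_card[OF sa] smo_card[OF sb] by (auto simp: A_def B_def)
  have fA: "finite A" and fB: "finite B" using Asub Bsub finite_subset by auto
  have "card (A \<union> B) = card A + card B" using fA fB disj by (rule card_Un_disjoint)
  then have "card (A \<union> B) = l" using cA cB il l by simp
  then have AB: "A \<union> B = {1..l}"
    using Asub Bsub by (intro card_subset_eq) auto
  have A_eq: "A = {1..l} - B" using AB disj by auto
  have "1 \<in> A" using a1 il l unfolding A_def by (auto intro!: image_eqI[of _ _ 1])
  have "B \<subseteq> {2..l}"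
  proof
    fix x assume "x \<in> B"
    then have "x \<in> {1..l}" "x \<noteq> 1" using Bsub disj \<open>1 \<in> A\<close> by auto
    then show "x \<in> {2..l}" by auto
  qed
  then show "\<beta> ` {1..i} \<subseteq> {2..l}" by (simp add: B_def)
  show "card (\<beta> ` {1..i}) = i" using cB by (simp add: B_def)
  have il': "i \<le> l" using il by simp
  have mA: "map \<alpha> [1..<l-i+1] = sorted_list_of_set A"
    apply (rule sls_eq[symmetric]) apply (simp add: A_def) apply (rule strict_map_sorted[OF sa]) by (simp only: map_upt_image A_def)
  have mB: "map \<beta> [1..<i+1] = sorted_list_of_set B"
    apply (rule sls_eq[symmetric]) apply (simp add: B_def) apply (rule strict_map_sorted[OF sb]) by (simp only: map_upt_image B_def)
  show "pword (k+l) (sigma_tilde \<alpha> \<beta> k l i) = [1..<k+1] @ map (\<lambda>j. k + j) (wordB l (\<beta> ` {1..i}))"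
    using il l unfolding pword_tilde[OF il'] mA mB wordB_def A_eq B_def by (simp del: upt_Suc)
qed



lemma nth_fun:
  assumes "sorted_wrt (<) (xs::nat list)"
  shows "strict_mono_on {1..length xs} (\<lambda>j. xs!(j-1))" "(\<lambda>j. xs!(j-1)) ` {1..length xs} = set xs"
proof -
  show "strict_mono_on {1..length xs} (\<lambda>j. xs!(j-1))"
    using assms unfolding strict_mono_on_def sorted_wrt_iff_nth_less by auto
  show "(\<lambda>j. xs!(j-1)) ` {1..length xs} = set xs"
  proof
    show "(\<lambda>j. xs!(j-1)) ` {1..length xs} \<subseteq> set xs" by auto
    show "set xs \<subseteq> (\<lambda>j. xs!(j-1)) ` {1..length xs}"
    proof
      fix x assume "x \<in> set xs"
      then obtain p where "p < length xs" "xs ! p = x" by (auto simp: in_set_conv_nth)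
      then show "x \<in> (\<lambda>j. xs!(j-1)) ` {1..length xs}" by (intro image_eqI[of _ _ "p+1"]) auto
    qed
  qed
qed

lemma lemK':
  assumes B: "B \<subseteq> {2..l}" and l: "l \<ge> 1"
  shows "\<exists>\<alpha> \<beta>. Sh1 (l - card B) (card B) \<alpha> \<beta> \<and> card B \<le> l - 1 \<and> \<beta> ` {1..card B} = B"
proof -
  define A where "A = {1..l} - B"
  define sA where "sA = sorted_list_of_set A"
  define sB where "sB = sorted_list_of_set B"
  have fB: "finite B" using B finite_subset by blast
  have cB: "card B \<le> l - 1" using card_mono[OF _ B] by simp
  have cA: "card A = l - card B" unfolding A_def using B fB by (subst card_Diff_subset) auto
  have lA: "length sA = l - card B" and lB: "length sB = card B" using cA by (auto simp: sA_def sB_def)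
  have ssA: "sorted_wrt (<) sA" and ssB: "sorted_wrt (<) sB" by (auto simp: sA_def sB_def)
  have setA: "set sA = A" and setB: "set sB = B" using fB by (auto simp: sA_def sB_def A_def)
  have "A = insert 1 (A - {1})" using B l by (auto simp: A_def)
  moreover have "sorted_list_of_set (insert 1 (A - {1})) = 1 # sorted_list_of_set (A - {1})"
    by (rule sorted_insert_min) (auto simp: A_def)
  ultimately have "sA = 1 # sorted_list_of_set (A - {1})" unfolding sA_def by simp
  then have a1: "sA ! (1 - 1) = 1" by simp
  note nA = nth_fun[OF ssA] and nB = nth_fun[OF ssB]
  have "Sh1 (l - card B) (card B) (\<lambda>j. sA!(j-1)) (\<lambda>j. sB!(j-1))"
    unfolding Sh1_def shuffle_def
  proof (intro conjI)
    show "strict_mono_on {1..l - card B} (\<lambda>j. sA!(j-1))" using nA(1) lA by simp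
    show "strict_mono_on {1..card B} (\<lambda>j. sB!(j-1))" using nB(1) lB by simp
    have e: "l - card B + card B = l" using cB l by simp
    show "(\<lambda>j. sA!(j-1)) ` {1..l - card B} \<subseteq> {1..l - card B + card B}"
      using nA(2) lA setA e by (auto simp: A_def)
    show "(\<lambda>j. sB!(j-1)) ` {1..card B} \<subseteq> {1..l - card B + card B}"
      using nB(2) lB setB e B by auto
    show "(\<lambda>j. sA!(j-1)) ` {1..l - card B} \<inter> (\<lambda>j. sB!(j-1)) ` {1..card B} = {}"
      using nA(2) nB(2) lA lB setA setB by (auto simp: A_def)
    show "sA ! (1 - 1) = 1" using a1 .
  qed
  moreover have "(\<lambda>j. sB!(j-1)) ` {1..card B} = B" using nB lB setB by simp
  ultimately show ?thesis using cB by blast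
qed

fun swapw :: "nat list \<Rightarrow> nat list" where
  "swapw (a # b # r) = b # a # r" | "swapw xs = xs"

lemma set_swapw: "set (swapw w) = set w" by (cases w rule: swapw.cases) auto
lemma distinct_swapw: "distinct (swapw w) = distinct w" by (cases w rule: swapw.cases) auto

lemma lbr_swapw: "length w \<ge> 2 \<Longrightarrow> lbr (swapw w) = neg (lbr w)"
proof (cases w rule: swapw.cases)
  case (1 a b r)
  have "br (X b) (X a) = neg (br (X a) (X b))" by (auto simp: br_def psub_def neg_def)
  then show ?thesis using 1 F_neg unfolding lbr_def F_def step_def[abs_def] by auto
qed auto

lemma tpow: "(transpose (1::nat) 2) ^^ i = (if even i then id else transpose 1 2)"
  by (induction i) auto

lemma pword_swap:
  assumes "m \<ge> 2"
  shows "pword m (f \<circ> transpose 1 2) = swapw (pword m f)"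
proof -
  have "[1..<m+1] = 1 # 2 # [3..<m+1]" using assms by (simp add: upt_conv_Cons numeral_3_eq_3 del: upt_Suc)
  moreover have "map (f \<circ> transpose 1 2) [3..<m+1] = map f [3..<m+1]" by auto
  ultimately show ?thesis unfolding pword_def by simp
qed

definition W :: "nat \<Rightarrow> nat \<Rightarrow> nat set \<Rightarrow> nat list" where
  "W k l B = [1..<k+1] @ map (\<lambda>j. k + j) (wordB l B)"
definition fw :: "nat \<Rightarrow> nat \<Rightarrow> nat set \<Rightarrow> nat list" where
  "fw k l B = (if even (card B) then W k l B else swapw (W k l B))"

lemma pword_sigma:
  assumes sh: "Sh1 (l - i) i \<alpha> \<beta>" and il: "i \<le> l - 1" and l: "l \<ge> 1" and k: "k \<ge> 1"
  shows "pword (k+l) (sigma_abkl \<alpha> \<beta> k l i) = fw k l (\<beta> ` {1..i})"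
proof -
  note K = lemK[OF sh il l]
  show ?thesis
  proof (cases "even i")
    case True
    then have "sigma_abkl \<alpha> \<beta> k l i = sigma_tilde \<alpha> \<beta> k l i" unfolding sigma_abkl_def tpow by simp
    then show ?thesis using K True unfolding fw_def W_def by simp
  next
    case False
    then have "sigma_abkl \<alpha> \<beta> k l i = sigma_tilde \<alpha> \<beta> k l i \<circ> transpose 1 2" unfolding sigma_abkl_def tpow by simp
    then show ?thesis using K k l False pword_swap[of "k+l"] unfolding fw_def W_def by simp
  qed
qed

lemma wordB_props:
  assumes "B \<subseteq> {1..l}"
  shows "set (wordB l B) = {1..l}" "distinct (wordB l B)" "length (wordB l B) = l"
proof -
  have fB: "finite B" using assms finite_subset by blast
  show "set (wordB l B) = {1..l}" using fB assms by (auto simp: wordB_def)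
  show "distinct (wordB l B)" using fB by (auto simp: wordB_def)
  then show "length (wordB l B) = l" using \<open>set (wordB l B) = {1..l}\<close> distinct_card by fastforce
qed

lemma W_props:
  assumes "B \<subseteq> {1..l}"
  shows "set (W k l B) = {1..k+l}" "distinct (W k l B)" "length (W k l B) = k + l"
proof -
  note P = wordB_props[OF assms]
  have "set (W k l B) = {1..k} \<union> (\<lambda>j. k + j) ` {1..l}" unfolding W_def using P(1) by auto
  also have "\<dots> = {1..k+l}"
  proof
    show "{1..k} \<union> (\<lambda>j. k + j) ` {1..l} \<subseteq> {1..k+l}" by auto
    show "{1..k+l} \<subseteq> {1..k} \<union> (\<lambda>j. k + j) ` {1..l}"
    proof
      fix x assume x: "x \<in> {1..k+l}"
      show "x \<in> {1..k} \<union> (\<lambda>j. k + j) ` {1..l}"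
      proof (cases "x \<le> k")
        case True then show ?thesis using x by auto
      next
        case False then have "x = k + (x - k)" "x - k \<in> {1..l}" using x by auto
        then show ?thesis by blast
      qed
    qed
  qed
  finally show "set (W k l B) = {1..k+l}" .
  show "distinct (W k l B)" unfolding W_def using P(1,2) by (auto simp: distinct_map inj_on_def)
  show "length (W k l B) = k + l" unfolding W_def using P(3) by simp
qed

lemma fw_props:
  assumes "B \<subseteq> {1..l}"
  shows "set (fw k l B) = {1..k+l}" "distinct (fw k l B)" "length (fw k l B) = k + l"
  using W_props[OF assms] by (auto simp: fw_def set_swapw distinct_swapw distinct_card[symmetric])



lemma permutes_of_pword:
  assumes "\<And>x. x \<notin> {1..m} \<Longrightarrow> \<sigma> x = x" "distinct (pword m \<sigma>)" "set (pword m \<sigma>) = {1..m}"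
  shows "\<sigma> permutes {1..m}"
proof (rule bij_imp_permutes)
  have s: "set [1..<m+1] = {1..m}" by auto
  have "inj_on \<sigma> {1..m}" using assms(2) unfolding pword_def distinct_map s by simp
  moreover have "\<sigma> ` {1..m} = {1..m}" using assms(3) unfolding pword_def set_map s .
  ultimately show "bij_betw \<sigma> {1..m} {1..m}" by (simp add: bij_betw_def)
  show "\<And>x. x \<notin> {1..m} \<Longrightarrow> \<sigma> x = x" by (rule assms(1))
qed

lemma pword_inj:
  assumes "\<sigma> permutes {1..m}" "\<tau> permutes {1..m}" "pword m \<sigma> = pword m \<tau>"
  shows "\<sigma> = \<tau>"
proof
  fix x
  show "\<sigma> x = \<tau> x"
  proof (cases "x \<in> {1..m}")
    case True
    have A: "\<forall>y\<in>set [1..<m+1]. \<sigma> y = \<tau> y" using assms(3) unfolding pword_def map_eq_conv .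
    have "x \<in> set [1..<m+1]" using True by (simp del: upt_Suc)
    then show ?thesis using A by blast
  next
    case False then show ?thesis using assms(1,2) by (simp add: permutes_not_in)
  qed
qed

lemma beta_SumP:
  assumes CP: "C \<subseteq> {\<sigma>. \<sigma> permutes {1..m}}"
  shows "beta m (SumP m C) = psum C (\<lambda>\<sigma>. lbr (pword m \<sigma>))"
proof (rule ext)
  fix w
  let ?P = "{\<sigma>. \<sigma> permutes {1..m}}"
  have fP: "finite ?P" by (rule finite_permutations) simp
  have fC: "finite C" using fP CP finite_subset by blast
  have coef: "SumP m C (pword m \<sigma>) = (if \<sigma> \<in> C then 1 else 0)" if "\<sigma> \<in> ?P" for \<sigma>
  proof -
    have "SumP m C (pword m \<sigma>) = (\<Sum>\<tau>\<in>C. if \<tau> = \<sigma> then 1 else 0)"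
      unfolding SumP_def psum_def mono_def
    proof (rule sum.cong[OF refl])
      fix \<tau> assume "\<tau> \<in> C"
      then have "\<tau> \<in> ?P" using CP by blast
      then show "(if pword m \<sigma> = pword m \<tau> then 1 else 0) = (if \<tau> = \<sigma> then 1 else (0::int))"
        using that pword_inj by auto
    qed
    also have "\<dots> = (if \<sigma> \<in> C then 1 else 0)" using fC by (simp add: sum.delta)
    finally show ?thesis .
  qed
  have "beta m (SumP m C) w = (\<Sum>\<sigma>\<in>?P. if \<sigma> \<in> C then lbr (pword m \<sigma>) w else 0)"
    unfolding beta_def psum_def by (rule sum.cong[OF refl]) (simp add: coef)
  also have "\<dots> = (\<Sum>\<sigma>\<in>?P \<inter> C. lbr (pword m \<sigma>) w)" using fP by (rule sum.inter_restrict[symmetric])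
  also have "?P \<inter> C = C" using CP by blast
  finally show "beta m (SumP m C) w = psum C (\<lambda>\<sigma>. lbr (pword m \<sigma>)) w" by (simp add: psum_def)
qed

lemma sig_out:
  assumes "x \<notin> {1..k+l}" "k + l \<ge> 2" "i \<le> l"
  shows "sigma_abkl \<alpha> \<beta> k l i x = x"
proof -
  have "((transpose (1::nat) 2) ^^ i) x = x" using assms unfolding tpow by auto
  then show ?thesis using assms unfolding sigma_abkl_def by (auto simp: sigma_tilde_def)
qed

lemma takeWhile_swapw:
  assumes "length pre \<ge> 2" "\<forall>x\<in>set pre. P x"
  shows "takeWhile P (swapw (pre @ ys)) = swapw pre @ takeWhile P ys"
  using assms by (cases pre rule: swapw.cases) auto

lemma W_split:
  assumes B: "B \<subseteq> {2..l}" and l: "l \<ge> 1"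
  shows "W k l B = ([1..<k+1] @ map (\<lambda>j. k + j) (rev (sorted_list_of_set B))) @
     (k+1) # map (\<lambda>j. k + j) (sorted_list_of_set ({1..l} - B - {1}))"
proof -
  have "insert 1 ({1..l} - B - {1}) = {1..l} - B" using B l by auto
  moreover have "sorted_list_of_set (insert 1 ({1..l} - B - {1})) = 1 # sorted_list_of_set ({1..l} - B - {1})"
    by (rule sorted_insert_min) auto
  ultimately have "sorted_list_of_set ({1..l} - B) = 1 # sorted_list_of_set ({1..l} - B - {1})" by simp
  then show ?thesis unfolding W_def wordB_def by simp
qed

definition tw :: "nat \<Rightarrow> nat list \<Rightarrow> nat set" where
  "tw k w = {j. j \<ge> 1 \<and> k + j \<in> set (takeWhile (\<lambda>x. x \<noteq> k + 1) w)}"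

lemma tw_fw:
  assumes B: "B \<subseteq> {2..l}" and l: "l \<ge> 1" and k: "k \<ge> 1"
  shows "tw k (fw k l B) = B"
proof -
  define pre where "pre = [1..<k+1] @ map (\<lambda>j. k + j) (rev (sorted_list_of_set B))"
  define rest where "rest = map (\<lambda>j. k + j) (sorted_list_of_set ({1..l} - B - {1}))"
  have fB: "finite B" using B finite_subset by blast
  have setpre: "set pre = {1..k} \<union> (\<lambda>j. k + j) ` B" using fB by (auto simp: pre_def)
  have npre: "\<forall>x\<in>set pre. x \<noteq> k + 1" using B unfolding setpre by auto
  have Wd: "W k l B = pre @ (k+1) # rest" unfolding pre_def rest_def by (rule W_split[OF B l])
  have T1: "takeWhile (\<lambda>x. x \<noteq> k + 1) (W k l B) = pre" unfolding Wd using npre by simp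
  have "set (takeWhile (\<lambda>x. x \<noteq> k + 1) (fw k l B)) = set pre"
  proof (cases "even (card B)")
    case True then show ?thesis using T1 by (simp add: fw_def)
  next
    case False
    then have "B \<noteq> {}" by auto
    then have "card B \<ge> 1" using fB by (simp add: Suc_le_eq card_gt_0_iff)
    then have "length pre \<ge> 2" using k by (simp add: pre_def)
    then have "takeWhile (\<lambda>x. x \<noteq> k + 1) (swapw (pre @ (k+1) # rest)) = swapw pre"
      using npre by (simp add: takeWhile_swapw)
    then show ?thesis using False by (simp add: fw_def Wd set_swapw)
  qed
  then show ?thesis unfolding tw_def setpre using B by auto
qed

lemma map_shift_upt: "map (\<lambda>j. k + j) [1..<l+1] = [k+1..<k+l+1]"
  by (rule nth_equalityI) (auto simp del: upt_Suc)


theorem lemma3: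
  fixes k l :: nat
  assumes "k \<ge> 1" and "l \<ge> 1"
  shows "br (lbr [1..<k+1]) (lbr [k+1..<k+l+1]) = beta (k + l) (SumP (k + l) (Ckl k l))"
proof -
  have k: "k \<ge> 1" and l: "l \<ge> 1" using assms by auto
  define m where "m = k + l"
  define C where "C = Ckl k l"
  define Q where "Q = Pow {2..l}"
  have m2: "k + l \<ge> 2" using k l by simp
  have pC: "pword (k+l) ` C = fw k l ` Q"
  proof
    show "pword (k+l) ` C \<subseteq> fw k l ` Q"
    proof
      fix w assume "w \<in> pword (k+l) ` C"
      then obtain i \<alpha> \<beta> where w: "w = pword (k+l) (sigma_abkl \<alpha> \<beta> k l i)"
        and il: "i \<le> l - 1" and sh: "Sh1 (l - i) i \<alpha> \<beta>"
        unfolding C_def Ckl_def by blast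
      have "w = fw k l (\<beta> ` {1..i})" using w pword_sigma[OF sh il l k] by simp
      moreover have "\<beta> ` {1..i} \<in> Q" using lemK(1)[OF sh il l] by (simp add: Q_def)
      ultimately show "w \<in> fw k l ` Q" by blast
    qed
    show "fw k l ` Q \<subseteq> pword (k+l) ` C"
    proof
      fix w assume "w \<in> fw k l ` Q"
      then obtain B where B: "B \<subseteq> {2..l}" and w: "w = fw k l B" unfolding Q_def by blast
      obtain \<alpha> \<beta> where sh: "Sh1 (l - card B) (card B) \<alpha> \<beta>" and il: "card B \<le> l - 1"
        and bi: "\<beta> ` {1..card B} = B" using lemK'[OF B l] by blast
      have "sigma_abkl \<alpha> \<beta> k l (card B) \<in> C" unfolding C_def Ckl_def using sh il by blast
      moreover have "pword (k+l) (sigma_abkl \<alpha> \<beta> k l (card B)) = w"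
        using pword_sigma[OF sh il l k] bi w by simp
      ultimately show "w \<in> pword (k+l) ` C" by blast
    qed
  qed
  have CP: "C \<subseteq> {\<sigma>. \<sigma> permutes {1..k+l}}"
  proof
    fix \<sigma> assume "\<sigma> \<in> C"
    then obtain i \<alpha> \<beta> where s: "\<sigma> = sigma_abkl \<alpha> \<beta> k l i"
        and il: "i \<le> l - 1" and sh: "Sh1 (l - i) i \<alpha> \<beta>"
        unfolding C_def Ckl_def by blast
    have Bs: "\<beta> ` {1..i} \<subseteq> {1..l}" using lemK(1)[OF sh il l] by auto
    have pw: "pword (k+l) \<sigma> = fw k l (\<beta> ` {1..i})" using s pword_sigma[OF sh il l k] by simp
    have "\<sigma> permutes {1..k+l}"
    proof (rule permutes_of_pword)
      have il': "i \<le> l" using il by simp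
      show "\<And>x. x \<notin> {1..k+l} \<Longrightarrow> \<sigma> x = x" unfolding s by (rule sig_out[OF _ m2 il'])
      show "distinct (pword (k+l) \<sigma>)" using pw fw_props(2)[OF Bs] by simp
      show "set (pword (k+l) \<sigma>) = {1..k+l}" using pw fw_props(1)[OF Bs] by simp
    qed
    then show "\<sigma> \<in> {\<sigma>. \<sigma> permutes {1..k+l}}" by simp
  qed
  have injp: "inj_on (pword (k+l)) C"
  proof (rule inj_onI)
    fix x y assume "x \<in> C" "y \<in> C" "pword (k+l) x = pword (k+l) y"
    then show "x = y" using CP pword_inj[of x "k+l" y] by blast
  qed
  have injf: "inj_on (fw k l) Q"
  proof (rule inj_onI)
    fix B1 B2 assume h: "B1 \<in> Q" "B2 \<in> Q" "fw k l B1 = fw k l B2"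
    have b1: "B1 \<subseteq> {2..l}" and b2: "B2 \<subseteq> {2..l}" using h(1,2) by (simp_all add: Q_def)
    have "B1 = tw k (fw k l B1)" using tw_fw[OF b1 l k] by simp
    also have "\<dots> = tw k (fw k l B2)" using h(3) by simp
    also have "\<dots> = B2" using tw_fw[OF b2 l k] by simp
    finally show "B1 = B2" .
  qed
  have fQ: "finite Q" by (simp add: Q_def)
  have R: "beta (k + l) (SumP (k + l) C) = psum Q (\<lambda>B. lbr (fw k l B))"
  proof -
    have "beta (k + l) (SumP (k + l) C) = psum C (\<lambda>\<sigma>. lbr (pword (k+l) \<sigma>))"
      by (rule beta_SumP[OF CP])
    also have "\<dots> = psum (pword (k+l) ` C) lbr"
      unfolding psum_def using injp by (simp add: sum.reindex)
    also have "\<dots> = psum (fw k l ` Q) lbr" by (simp only: pC)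
    also have "\<dots> = psum Q (\<lambda>B. lbr (fw k l B))"
      unfolding psum_def using injf by (simp add: sum.reindex)
    finally show ?thesis .
  qed
  define u where "u = lbr [1..<k+1]"
  have ne: "[1..<k+1] \<noteq> []" using k by simp
  have L: "br u (lbr [k+1..<k+l+1]) = psum Q (\<lambda>B. sgnp (card B) (F u (map (\<lambda>j. k + j) (wordB l B))))"
    using lemA[OF l, of u k] by (simp only: map_shift_upt Q_def)
  also have "\<dots> = psum Q (\<lambda>B. lbr (fw k l B))"
    unfolding psum_def
  proof (intro ext sum.cong refl)
    fix B w assume "B \<in> Q"
    then have Bs: "B \<subseteq> {1..l}" by (auto simp: Q_def)
    have e: "F u (map (\<lambda>j. k + j) (wordB l B)) = lbr (W k l B)"
      unfolding u_def W_def lbr_append[OF ne] ..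
    have "length (W k l B) \<ge> 2" using W_props(3)[OF Bs] m2 by simp
    then show "sgnp (card B) (F u (map (\<lambda>j. k + j) (wordB l B))) w = lbr (fw k l B) w"
      unfolding e sgnp_def fw_def by (simp add: lbr_swapw)
  qed
  finally show ?thesis using R by (simp add: u_def C_def)
qed

end
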